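(* Let $R$ be a domain and let $G$ be a finite undirected graph without loops with vertex set $A=\{a_1,\dots,a_n\}$, $n\geqslant 2$, such that the complement graph $\overline{G}$ is connected. Suppose the partially commutative metabelian Lie algebra $\mathcal{M}(A;G)=L_1\oplus L_2$ is a direct sum of two subalgebras such that for every $i\in\{1,\dots,n\}$ we have $(a_i)_1=a_i+g_i$ and $(a_i)_2=-g_i$ with $g_i\in\mathcal{M}(A;G)$ and $a_i\notin\mathrm{supp}(\omega_1(g_i))$. Then $g_i=0$ for all $i\in\{1,\dots,n\}$.
   Context: All Lie algebras are over the domain $R$. The complement graph $\overline{G}$ has vertex set $A$, with distinct vertices adjacent iff they are not adjacent in $G$. $\mathcal{M}(A;G)$ is the Lie $R$-algebra presented in the variety of metabelian Lie algebras (identity $[[x,y],[z,t]]=0$) by generators $A$ and relations $[a_p,a_q]=0$ for all edges $\{a_p,a_q\}$ of $G$. Since relations and identities are multi-homogeneous, every element $h$ is uniquely a sum of nonzero multi-homogeneous components (multi-degree of a Lie monomial = vector counting occurrences of each $a_p$). $\mathrm{supp}(h)$ is the set of $a_p$ occurring with nonzero exponent in the multi-degree of some component of $h$; $\omega_1(h)$ is the sum of the components of length $1$. A direct sum $L=L_1\oplus L_2$ of subalgebras means $L_1,L_2$ are subalgebras, $L=L_1\oplus L_2$ as $R$-modules and $[L_1,L_2]=0$; for $h\in L$, $(h)_1\in L_1$, $(h)_2\in L_2$ are the unique elements with $h=(h)_1+(h)_2$. *)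

theory Defs
  imports Main
begin

datatype 'a lterm = Gen 'a | Br "'a lterm" "'a lterm"

fun gens :: "'a lterm \<Rightarrow> 'a set" where
  "gens (Gen a) = {a}"
| "gens (Br u v) = gens u \<union> gens v"

fun mdeg :: "'a lterm \<Rightarrow> 'a \<Rightarrow> nat" where
  "mdeg (Gen a) = (\<lambda>b. if b = a then 1 else 0)"
| "mdeg (Br u v) = (\<lambda>b. mdeg u b + mdeg v b)"

fun llen :: "'a lterm \<Rightarrow> nat" where
  "llen (Gen a) = 1"
| "llen (Br u v) = llen u + llen v"

section \<open>The free nonassociative R-algebra on A (finite R-combinations of bracketings)\<close>

definition FA :: "'a set \<Rightarrow> ('a lterm \<Rightarrow> 'r::idom) set" where
  "FA A = {f. finite {t. f t \<noteq> 0} \<and> (\<forall>t. f t \<noteq> 0 \<longrightarrow> gens t \<subseteq> A)}"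

definition fzero :: "'a lterm \<Rightarrow> 'r::idom" where "fzero = (\<lambda>t. 0)"
definition fadd :: "('a lterm \<Rightarrow> 'r::idom) \<Rightarrow> ('a lterm \<Rightarrow> 'r) \<Rightarrow> 'a lterm \<Rightarrow> 'r" where
  "fadd f g = (\<lambda>t. f t + g t)"
definition fsmult :: "'r::idom \<Rightarrow> ('a lterm \<Rightarrow> 'r) \<Rightarrow> 'a lterm \<Rightarrow> 'r" where
  "fsmult c f = (\<lambda>t. c * f t)"
definition fdiff :: "('a lterm \<Rightarrow> 'r::idom) \<Rightarrow> ('a lterm \<Rightarrow> 'r) \<Rightarrow> 'a lterm \<Rightarrow> 'r" where
  "fdiff f g = (\<lambda>t. f t - g t)"
definition fgen :: "'a \<Rightarrow> 'a lterm \<Rightarrow> 'r::idom" where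
  "fgen a = (\<lambda>t. if t = Gen a then 1 else 0)"
fun fbr :: "('a lterm \<Rightarrow> 'r::idom) \<Rightarrow> ('a lterm \<Rightarrow> 'r) \<Rightarrow> 'a lterm \<Rightarrow> 'r" where
  "fbr f g (Gen a) = 0"
| "fbr f g (Br u v) = f u * g v"

section \<open>The ideal defining M(A;G): Lie identities, metabelian identity, relations [a_p,a_q] for edges\<close>

inductive_set rel_ideal :: "'a set \<Rightarrow> ('a \<Rightarrow> 'a \<Rightarrow> bool) \<Rightarrow> ('a lterm \<Rightarrow> 'r::idom) set"
  for A :: "'a set" and E :: "'a \<Rightarrow> 'a \<Rightarrow> bool" where
  alt: "x \<in> FA A \<Longrightarrow> fbr x x \<in> rel_ideal A E"
| jacobi: "\<lbrakk>x \<in> FA A; y \<in> FA A; z \<in> FA A\<rbrakk> \<Longrightarrow>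
     fadd (fadd (fbr x (fbr y z)) (fbr y (fbr z x))) (fbr z (fbr x y)) \<in> rel_ideal A E"
| metab: "\<lbrakk>x \<in> FA A; y \<in> FA A; z \<in> FA A; w \<in> FA A\<rbrakk> \<Longrightarrow>
     fbr (fbr x y) (fbr z w) \<in> rel_ideal A E"
| edge: "\<lbrakk>p \<in> A; q \<in> A; E p q\<rbrakk> \<Longrightarrow> fbr (fgen p) (fgen q) \<in> rel_ideal A E"
| zero: "fzero \<in> rel_ideal A E"
| add: "\<lbrakk>x \<in> rel_ideal A E; y \<in> rel_ideal A E\<rbrakk> \<Longrightarrow> fadd x y \<in> rel_ideal A E"
| smult: "x \<in> rel_ideal A E \<Longrightarrow> fsmult c x \<in> rel_ideal A E"
| brl: "\<lbrakk>x \<in> rel_ideal A E; y \<in> FA A\<rbrakk> \<Longrightarrow> fbr x y \<in> rel_ideal A E"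
| brr: "\<lbrakk>x \<in> rel_ideal A E; y \<in> FA A\<rbrakk> \<Longrightarrow> fbr y x \<in> rel_ideal A E"

definition Mcls :: "'a set \<Rightarrow> ('a \<Rightarrow> 'a \<Rightarrow> bool) \<Rightarrow> ('a lterm \<Rightarrow> 'r::idom) \<Rightarrow> ('a lterm \<Rightarrow> 'r) set" where
  "Mcls A E x = {y \<in> FA A. fdiff x y \<in> rel_ideal A E}"

definition Mset :: "'a set \<Rightarrow> ('a \<Rightarrow> 'a \<Rightarrow> bool) \<Rightarrow> ('a lterm \<Rightarrow> 'r::idom) set set" where
  "Mset A E = Mcls A E ` FA A"

definition Mrep :: "('a lterm \<Rightarrow> 'r::idom) set \<Rightarrow> 'a lterm \<Rightarrow> 'r" where
  "Mrep X = (SOME x. x \<in> X)"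

definition Mzero :: "'a set \<Rightarrow> ('a \<Rightarrow> 'a \<Rightarrow> bool) \<Rightarrow> ('a lterm \<Rightarrow> 'r::idom) set" where
  "Mzero A E = Mcls A E fzero"
definition Madd where
  "Madd A E X Y = Mcls A E (fadd (Mrep X) (Mrep Y))"
definition Msmult where
  "Msmult A E c X = Mcls A E (fsmult c (Mrep X))"
definition Mbr where
  "Mbr A E X Y = Mcls A E (fbr (Mrep X) (Mrep Y))"
definition Mgen where
  "Mgen A E a = Mcls A E (fgen a)"

definition Mcomp :: "'a set \<Rightarrow> ('a \<Rightarrow> 'a \<Rightarrow> bool) \<Rightarrow> ('a \<Rightarrow> nat) \<Rightarrow> ('a lterm \<Rightarrow> 'r::idom) set \<Rightarrow> ('a lterm \<Rightarrow> 'r) set" where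
  "Mcomp A E d X = Mcls A E (\<lambda>t. if mdeg t = d then Mrep X t else 0)"

definition Msupp :: "'a set \<Rightarrow> ('a \<Rightarrow> 'a \<Rightarrow> bool) \<Rightarrow> ('a lterm \<Rightarrow> 'r::idom) set \<Rightarrow> 'a set" where
  "Msupp A E X = {a \<in> A. \<exists>d. d a \<noteq> 0 \<and> Mcomp A E d X \<noteq> Mzero A E}"

definition omega1 :: "'a set \<Rightarrow> ('a \<Rightarrow> 'a \<Rightarrow> bool) \<Rightarrow> ('a lterm \<Rightarrow> 'r::idom) set \<Rightarrow> ('a lterm \<Rightarrow> 'r) set" where
  "omega1 A E X = Mcls A E (\<lambda>t. if llen t = 1 then Mrep X t else 0)"

definition subalg :: "'a set \<Rightarrow> ('a \<Rightarrow> 'a \<Rightarrow> bool) \<Rightarrow> ('a lterm \<Rightarrow> 'r::idom) set set \<Rightarrow> bool" where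
  "subalg A E L \<longleftrightarrow> L \<subseteq> Mset A E \<and> Mzero A E \<in> L
     \<and> (\<forall>X\<in>L. \<forall>Y\<in>L. Madd A E X Y \<in> L)
     \<and> (\<forall>c. \<forall>X\<in>L. Msmult A E c X \<in> L)
     \<and> (\<forall>X\<in>L. \<forall>Y\<in>L. Mbr A E X Y \<in> L)"

definition direct_sum :: "'a set \<Rightarrow> ('a \<Rightarrow> 'a \<Rightarrow> bool) \<Rightarrow> ('a lterm \<Rightarrow> 'r::idom) set set \<Rightarrow> ('a lterm \<Rightarrow> 'r) set set \<Rightarrow> bool" where
  "direct_sum A E L1 L2 \<longleftrightarrow> subalg A E L1 \<and> subalg A E L2
     \<and> (\<forall>H\<in>Mset A E. \<exists>!p. fst p \<in> L1 \<and> snd p \<in> L2 \<and> H = Madd A E (fst p) (snd p))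
     \<and> (\<forall>X\<in>L1. \<forall>Y\<in>L2. Mbr A E X Y = Mzero A E)"

definition proj1 where
  "proj1 A E L1 L2 H = (THE X. X \<in> L1 \<and> (\<exists>Y\<in>L2. H = Madd A E X Y))"
definition proj2 where
  "proj2 A E L1 L2 H = (THE Y. Y \<in> L2 \<and> (\<exists>X\<in>L1. H = Madd A E X Y))"

definition simple_graph :: "'a set \<Rightarrow> ('a \<Rightarrow> 'a \<Rightarrow> bool) \<Rightarrow> bool" where
  "simple_graph A E \<longleftrightarrow> finite A \<and> (\<forall>x y. E x y \<longrightarrow> x \<in> A \<and> y \<in> A)
     \<and> (\<forall>x y. E x y \<longrightarrow> E y x) \<and> (\<forall>x. \<not> E x x)"

definition compl_connected :: "'a set \<Rightarrow> ('a \<Rightarrow> 'a \<Rightarrow> bool) \<Rightarrow> bool" where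
  "compl_connected A E \<longleftrightarrow>
     (\<forall>x\<in>A. \<forall>y\<in>A. (\<lambda>u v. u \<in> A \<and> v \<in> A \<and> u \<noteq> v \<and> \<not> E u v)\<^sup>*\<^sup>* x y)"

end

theory Submission imports Defs begin

definition dl :: "'a lterm \<Rightarrow> 'a lterm \<Rightarrow> 'r::idom" where
  "dl t = (\<lambda>s. if s = t then 1 else 0)"

lemma FA_fzero: "fzero \<in> FA A"
  by (simp add: FA_def fzero_def)

lemma FA_zero': "(\<lambda>_. 0) \<in> FA A"
  by (simp add: FA_def)

lemma FA_fadd: "x \<in> FA A \<Longrightarrow> y \<in> FA A \<Longrightarrow> fadd x y \<in> FA A"
  unfolding FA_def fadd_def
  by (auto intro: finite_subset[of _ "{t. x t \<noteq> 0} \<union> {t. y t \<noteq> 0}"]) (metis add.right_neutral subsetD)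

lemma FA_fsmult: "x \<in> FA A \<Longrightarrow> fsmult c x \<in> FA A"
  unfolding FA_def fsmult_def
  by (auto intro: finite_subset[of _ "{t. x t \<noteq> 0}"])

lemma FA_fdiff: "x \<in> FA A \<Longrightarrow> y \<in> FA A \<Longrightarrow> fdiff x y \<in> FA A"
  unfolding FA_def fdiff_def
  by (auto intro: finite_subset[of _ "{t. x t \<noteq> 0} \<union> {t. y t \<noteq> 0}"]) (metis subsetD)

lemma FA_restrict: "x \<in> FA A \<Longrightarrow> (\<lambda>t. if P t then x t else 0) \<in> FA A"
  unfolding FA_def
  by (auto intro: finite_subset[of _ "{t. x t \<noteq> 0}"])

lemma FA_upd0: "x \<in> FA A \<Longrightarrow> x(t := 0) \<in> FA A"
  unfolding FA_def
  by (auto intro: finite_subset[of _ "{t. x t \<noteq> 0}"])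

lemma FA_fbr: assumes "x \<in> FA A" "y \<in> FA A" shows "fbr x y \<in> FA A"
proof -
  have sub: "{t. fbr x y t \<noteq> 0} \<subseteq> (\<lambda>(u,v). Br u v) ` ({t. x t \<noteq> 0} \<times> {t. y t \<noteq> 0})"
  proof
    fix t assume "t \<in> {t. fbr x y t \<noteq> 0}"
    then show "t \<in> (\<lambda>(u,v). Br u v) ` ({t. x t \<noteq> 0} \<times> {t. y t \<noteq> 0})"
      by (cases t) auto
  qed
  have "finite {t. fbr x y t \<noteq> 0}"
    using assms by (intro finite_subset[OF sub]) (auto simp: FA_def)
  moreover have "\<forall>t. fbr x y t \<noteq> 0 \<longrightarrow> gens t \<subseteq> A"
  proof (intro allI impI)
    fix t assume "fbr x y t \<noteq> 0"
    then show "gens t \<subseteq> A" using assms by (cases t) (auto simp: FA_def)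
  qed
  ultimately show ?thesis by (simp add: FA_def)
qed

lemma FA_dl: "gens t \<subseteq> A \<Longrightarrow> (dl t :: 'a lterm \<Rightarrow> 'r::idom) \<in> FA A"
  by (simp add: FA_def dl_def)

lemma fgen_dl: "fgen a = dl (Gen a)"
  by (simp add: fgen_def dl_def fun_eq_iff)

lemma FA_fgen: "a \<in> A \<Longrightarrow> fgen a \<in> FA A"
  by (simp add: fgen_dl FA_dl)

lemma fbr_add_l: "fbr (fadd x y) z = fadd (fbr x z) (fbr y z)"
  by (rule ext, case_tac xa) (simp_all add: fadd_def algebra_simps)
lemma fbr_add_r: "fbr z (fadd x y) = fadd (fbr z x) (fbr z y)"
  by (rule ext, case_tac xa) (simp_all add: fadd_def algebra_simps)
lemma fbr_smult_l: "fbr (fsmult c x) z = fsmult c (fbr x z)"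
  by (rule ext, case_tac xa) (simp_all add: fsmult_def algebra_simps)
lemma fbr_smult_r: "fbr z (fsmult c x) = fsmult c (fbr z x)"
  by (rule ext, case_tac xa) (simp_all add: fsmult_def algebra_simps)
lemma fbr_diff_l: "fbr (fdiff x y) z = fdiff (fbr x z) (fbr y z)"
  by (rule ext, case_tac xa) (simp_all add: fdiff_def algebra_simps)
lemma fbr_diff_r: "fbr z (fdiff x y) = fdiff (fbr z x) (fbr z y)"
  by (rule ext, case_tac xa) (simp_all add: fdiff_def algebra_simps)
lemma fbr_zero_r: "fbr z (\<lambda>_. 0) = fzero"
  by (rule ext, case_tac x) (simp_all add: fzero_def)
lemma fbr_zero_l: "fbr (\<lambda>_. 0) z = fzero"
  by (rule ext, case_tac x) (simp_all add: fzero_def)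
lemma fbr_dl: "fbr (dl u) (dl v) = dl (Br u v)"
  by (rule ext, case_tac x) (simp_all add: dl_def)
lemma upd_eq: "f t = 0 \<Longrightarrow> f(t := c) = fadd f (fsmult c (dl t))"
  by (auto simp: fun_eq_iff fadd_def fsmult_def dl_def)

lemma I_fdiff: "x \<in> rel_ideal A E \<Longrightarrow> y \<in> rel_ideal A E \<Longrightarrow> fdiff x y \<in> rel_ideal A E"
proof -
  assume "x \<in> rel_ideal A E" "y \<in> rel_ideal A E"
  then have "fadd x (fsmult (-1) y) \<in> rel_ideal A E" by (intro rel_ideal.add rel_ideal.smult)
  moreover have "fadd x (fsmult (-1) y) = fdiff x y" by (simp add: fun_eq_iff fadd_def fsmult_def fdiff_def)
  ultimately show ?thesis by simp
qed

lemma I_zero': "(\<lambda>_. 0) \<in> rel_ideal A E"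
  using rel_ideal.zero[of A E] by (simp add: fzero_def)

lemma I_vanish:
  assumes "x \<in> rel_ideal A E"
  shows "(\<forall>a. x (Gen a) = 0) \<and> (\<forall>p q. \<not> E p q \<longrightarrow> \<not> E q p \<longrightarrow> x (Br (Gen p) (Gen q)) = x (Br (Gen q) (Gen p)))"
  using assms
proof (induction rule: rel_ideal.induct)
  case (jacobi x y z) then show ?case by (simp add: fadd_def)
next
  case (edge p q) then show ?case by (auto simp: fgen_def)
qed (auto simp: fadd_def fsmult_def fzero_def)

lemma I_antisym:
  assumes "x \<in> FA A" "y \<in> FA A" "fbr y x \<in> rel_ideal A E"
  shows "fbr x y \<in> rel_ideal A E"
proof -
  let ?s = "fadd x y"
  have "fdiff (fdiff (fdiff (fbr ?s ?s) (fbr x x)) (fbr y y)) (fbr y x) \<in> rel_ideal A E"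
    using assms by (intro I_fdiff rel_ideal.alt FA_fadd)
  moreover have "fdiff (fdiff (fdiff (fbr ?s ?s) (fbr x x)) (fbr y y)) (fbr y x) = fbr x y"
    by (rule ext, case_tac xa) (simp_all add: fdiff_def fadd_def algebra_simps)
  ultimately show ?thesis by simp
qed


lemma Mcls_self: "x \<in> FA A \<Longrightarrow> x \<in> Mcls A E x"
  using rel_ideal.zero[of A E] by (simp add: Mcls_def fdiff_def fzero_def)

lemma Mrep_in: "x \<in> FA A \<Longrightarrow> Mrep (Mcls A E x) \<in> Mcls A E x"
  unfolding Mrep_def by (rule someI[of "\<lambda>y. y \<in> Mcls A E x"], erule Mcls_self)

lemma Mrep_FA: "x \<in> FA A \<Longrightarrow> Mrep (Mcls A E x) \<in> FA A"
  using Mrep_in[of x A E] by (simp add: Mcls_def)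

lemma Mrep_diff: "x \<in> FA A \<Longrightarrow> fdiff x (Mrep (Mcls A E x)) \<in> rel_ideal A E"
  using Mrep_in[of x A E] by (simp add: Mcls_def)

lemma Mcls_eq:
  assumes "x \<in> FA A" "y \<in> FA A" "fdiff x y \<in> rel_ideal A E"
  shows "Mcls A E x = Mcls A E y"
proof -
  have "fdiff x z \<in> rel_ideal A E \<longleftrightarrow> fdiff y z \<in> rel_ideal A E" for z
  proof
    assume "fdiff x z \<in> rel_ideal A E"
    from I_fdiff[OF this assms(3)] show "fdiff y z \<in> rel_ideal A E"
      by (simp add: fdiff_def)
  next
    assume "fdiff y z \<in> rel_ideal A E"
    from rel_ideal.add[OF assms(3) this] show "fdiff x z \<in> rel_ideal A E"
      by (simp add: fdiff_def fadd_def)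
  qed
  then show ?thesis by (simp add: Mcls_def)
qed

lemma Mcls_eq_iff:
  assumes "x \<in> FA A" "y \<in> FA A"
  shows "Mcls A E x = Mcls A E y \<longleftrightarrow> fdiff x y \<in> rel_ideal A E"
proof
  assume "Mcls A E x = Mcls A E y"
  then have "y \<in> Mcls A E x" using Mcls_self[OF assms(2)] by simp
  then show "fdiff x y \<in> rel_ideal A E" by (simp add: Mcls_def)
qed (rule Mcls_eq[OF assms])

lemma Mcls_in: "x \<in> FA A \<Longrightarrow> Mcls A E x \<in> Mset A E"
  by (simp add: Mset_def)

lemma Mset_rep:
  assumes "X \<in> Mset A E"
  shows "Mrep X \<in> FA A \<and> X = Mcls A E (Mrep X)"
proof -
  obtain x where x: "x \<in> FA A" "X = Mcls A E x" using assms by (auto simp: Mset_def)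
  have r: "Mrep X \<in> FA A" using Mrep_FA[OF x(1)] x(2) by simp
  have "fdiff x (Mrep X) \<in> rel_ideal A E" using Mrep_diff[OF x(1)] x(2) by simp
  then have "Mcls A E x = Mcls A E (Mrep X)" using Mcls_eq[OF x(1) r] by simp
  then have "X = Mcls A E (Mrep X)" using x(2) by (rule trans[rotated])
  with r show ?thesis by (rule conjI)
qed

lemma Mrep_FA': "X \<in> Mset A E \<Longrightarrow> Mrep X \<in> FA A"
  using Mset_rep[of X A E] by (rule conjunct1)

lemma Madd_cls:
  assumes "x \<in> FA A" "y \<in> FA A"
  shows "Madd A E (Mcls A E x) (Mcls A E y) = Mcls A E (fadd x y)"
proof -
  have "fdiff (fadd x y) (fadd (Mrep (Mcls A E x)) (Mrep (Mcls A E y)))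
      = fadd (fdiff x (Mrep (Mcls A E x))) (fdiff y (Mrep (Mcls A E y)))"
    by (simp add: fun_eq_iff fadd_def fdiff_def)
  moreover have "\<dots> \<in> rel_ideal A E" using assms by (intro rel_ideal.add Mrep_diff)
  ultimately have "Mcls A E (fadd x y) = Mcls A E (fadd (Mrep (Mcls A E x)) (Mrep (Mcls A E y)))"
    using assms by (intro Mcls_eq FA_fadd Mrep_FA) auto
  then show ?thesis unfolding Madd_def by simp
qed

lemma Msmult_cls:
  assumes "x \<in> FA A"
  shows "Msmult A E c (Mcls A E x) = Mcls A E (fsmult c x)"
proof -
  have "fdiff (fsmult c x) (fsmult c (Mrep (Mcls A E x)))
      = fsmult c (fdiff x (Mrep (Mcls A E x)))"
    by (simp add: fun_eq_iff fsmult_def fdiff_def algebra_simps)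
  moreover have "\<dots> \<in> rel_ideal A E" using assms by (intro rel_ideal.smult Mrep_diff)
  ultimately have "Mcls A E (fsmult c x) = Mcls A E (fsmult c (Mrep (Mcls A E x)))"
    using assms by (intro Mcls_eq FA_fsmult Mrep_FA) auto
  then show ?thesis unfolding Msmult_def by simp
qed

lemma Mbr_cls:
  assumes "x \<in> FA A" "y \<in> FA A"
  shows "Mbr A E (Mcls A E x) (Mcls A E y) = Mcls A E (fbr x y)"
proof -
  let ?x = "Mrep (Mcls A E x)" and ?y = "Mrep (Mcls A E y)"
  have "fdiff (fbr x y) (fbr ?x ?y) = fadd (fbr (fdiff x ?x) y) (fbr ?x (fdiff y ?y))"
    by (rule ext, case_tac xa) (simp_all add: fadd_def fdiff_def algebra_simps)
  moreover have "\<dots> \<in> rel_ideal A E" using assms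
    by (intro rel_ideal.add rel_ideal.brl rel_ideal.brr Mrep_diff Mrep_FA)
  ultimately have "Mcls A E (fbr x y) = Mcls A E (fbr ?x ?y)"
    using assms by (intro Mcls_eq FA_fbr Mrep_FA) auto
  then show ?thesis unfolding Mbr_def by simp
qed

lemma Mzero_iff:
  assumes "x \<in> FA A"
  shows "Mcls A E x = Mzero A E \<longleftrightarrow> x \<in> rel_ideal A E"
proof -
  have "fdiff x fzero = x" by (simp add: fun_eq_iff fdiff_def fzero_def)
  then show ?thesis unfolding Mzero_def using Mcls_eq_iff[OF assms FA_fzero] by simp
qed

lemma Madd_Mset: "X \<in> Mset A E \<Longrightarrow> Y \<in> Mset A E \<Longrightarrow> Madd A E X Y \<in> Mset A E"
  unfolding Madd_def by (intro Mcls_in FA_fadd; simp add: Mrep_FA')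
lemma Msmult_Mset: "X \<in> Mset A E \<Longrightarrow> Msmult A E c X \<in> Mset A E"
  unfolding Msmult_def by (intro Mcls_in FA_fsmult; simp add: Mrep_FA')
lemma Mbr_Mset: "X \<in> Mset A E \<Longrightarrow> Y \<in> Mset A E \<Longrightarrow> Mbr A E X Y \<in> Mset A E"
  unfolding Mbr_def by (intro Mcls_in FA_fbr; simp add: Mrep_FA')
lemma Mzero_Mset: "Mzero A E \<in> Mset A E"
  unfolding Mzero_def by (intro Mcls_in FA_fzero)
lemma Mgen_Mset: "a \<in> A \<Longrightarrow> Mgen A E a \<in> Mset A E"
  unfolding Mgen_def by (intro Mcls_in FA_fgen)

definition Lv where "Lv X a = Mrep X (Gen a)"
definition Qv where "Qv X p q = Mrep X (Br (Gen p) (Gen q)) - Mrep X (Br (Gen q) (Gen p))"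

lemma Lv_cls: "x \<in> FA A \<Longrightarrow> Lv (Mcls A E x) a = x (Gen a)"
  using I_vanish[OF Mrep_diff[of x A E]] by (simp add: Lv_def fdiff_def)

lemma Qv_cls: "x \<in> FA A \<Longrightarrow> \<not> E p q \<Longrightarrow> \<not> E q p \<Longrightarrow>
   Qv (Mcls A E x) p q = x (Br (Gen p) (Gen q)) - x (Br (Gen q) (Gen p))"
  using I_vanish[OF Mrep_diff[of x A E]] by (simp add: Qv_def fdiff_def algebra_simps)

lemma Lv_add: assumes "X \<in> Mset A E" "Y \<in> Mset A E" shows "Lv (Madd A E X Y) a = Lv X a + Lv Y a"
proof -
  have "fadd (Mrep X) (Mrep Y) \<in> FA A" using assms by (intro FA_fadd Mrep_FA')
  from Lv_cls[where E=E and a=a, OF this] show ?thesis unfolding Madd_def by (simp add: fadd_def Lv_def)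
qed
lemma Lv_smult: assumes "X \<in> Mset A E" shows "Lv (Msmult A E c X) a = c * Lv X a"
proof -
  have "fsmult c (Mrep X) \<in> FA A" using assms by (intro FA_fsmult Mrep_FA')
  from Lv_cls[where E=E and a=a, OF this] show ?thesis unfolding Msmult_def by (simp add: fsmult_def Lv_def)
qed
lemma Lv_br: assumes "X \<in> Mset A E" "Y \<in> Mset A E" shows "Lv (Mbr A E X Y) a = 0"
proof -
  have "fbr (Mrep X) (Mrep Y) \<in> FA A" using assms by (intro FA_fbr Mrep_FA')
  from Lv_cls[where E=E and a=a, OF this] show ?thesis unfolding Mbr_def by simp
qed
lemma Lv_gen: assumes "b \<in> A" shows "Lv (Mgen A E b) a = (if a = b then 1 else 0)"
  using Lv_cls[where E=E and a=a, OF FA_fgen[OF assms]] unfolding Mgen_def by (simp add: fgen_def)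
lemma Qv_add: assumes "X \<in> Mset A E" "Y \<in> Mset A E" "\<not> E p q" "\<not> E q p"
  shows "Qv (Madd A E X Y) p q = Qv X p q + Qv Y p q"
proof -
  have "fadd (Mrep X) (Mrep Y) \<in> FA A" using assms by (intro FA_fadd Mrep_FA')
  from Qv_cls[where E=E and p=p and q=q, OF this assms(3,4)] show ?thesis unfolding Madd_def by (simp add: fadd_def Qv_def)
qed
lemma Qv_br: assumes "X \<in> Mset A E" "Y \<in> Mset A E" "\<not> E p q" "\<not> E q p"
  shows "Qv (Mbr A E X Y) p q = Lv X p * Lv Y q - Lv X q * Lv Y p"
proof -
  have "fbr (Mrep X) (Mrep Y) \<in> FA A" using assms by (intro FA_fbr Mrep_FA')
  from Qv_cls[where E=E and p=p and q=q, OF this assms(3,4)] show ?thesis unfolding Mbr_def by (simp add: Lv_def)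
qed
lemma Mzero_cls: "Mzero A E = Mcls A E (\<lambda>_. 0)"
  by (simp add: Mzero_def fzero_def)
lemma Qv_zero: "\<not> E p q \<Longrightarrow> \<not> E q p \<Longrightarrow> Qv (Mzero A E) p q = 0"
  unfolding Mzero_cls using Qv_cls[where E=E and p=p and q=q, OF FA_zero'] by simp
lemma Lv_zero: "Lv (Mzero A E) a = 0"
  unfolding Mzero_cls using Lv_cls[where A=A and E=E and a=a, OF FA_zero'] by simp


lemma supp_induct:
  assumes "finite {t. f t \<noteq> 0}" "P (\<lambda>_. 0)"
    "\<And>f t c. P f \<Longrightarrow> f t = 0 \<Longrightarrow> P (f(t := c))"
  shows "P f"
proof -
  have "\<forall>f. {t. f t \<noteq> 0} = S \<longrightarrow> P f" if "finite S" for S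
    using that
  proof (induction S rule: finite_induct)
    case empty
    then show ?case using assms(2) by (auto simp: fun_eq_iff)
  next
    case (insert x S)
    show ?case
    proof (intro allI impI)
      fix f :: "'a \<Rightarrow> 'b" assume f: "{t. f t \<noteq> 0} = insert x S"
      have "{t. (f(x := 0)) t \<noteq> 0} = S" using f insert(2) by auto
      then have "P (f(x := 0))" using insert(3) by blast
      from assms(3)[OF this, of x "f x"] show "P f" by simp
    qed
  qed
  then show ?thesis using assms(1) by blast
qed

definition pure :: "('a lterm \<Rightarrow> 'r::idom) \<Rightarrow> bool" where
  "pure f \<longleftrightarrow> (\<forall>a. f (Gen a) = 0)"

lemma pure_induct:
  assumes f: "f \<in> FA A" "pure f"
    and base: "Q (\<lambda>_. 0)"
    and step: "\<And>f u v c. f \<in> FA A \<Longrightarrow> pure f \<Longrightarrow> Q f \<Longrightarrow> gens u \<subseteq> A \<Longrightarrow> gens v \<subseteq> A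
      \<Longrightarrow> Q (fadd f (fsmult c (dl (Br u v))))"
  shows "Q f"
proof -
  have fin: "finite {t. f t \<noteq> 0}" using f by (simp add: FA_def)
  have "f \<in> FA A \<longrightarrow> pure f \<longrightarrow> Q f"
  proof (rule supp_induct[OF fin])
    show "(\<lambda>_. 0) \<in> FA A \<longrightarrow> pure (\<lambda>_. 0) \<longrightarrow> Q (\<lambda>_. 0)" using base by simp
  next
    fix g :: "'a lterm \<Rightarrow> 'b" and t c
    assume IH: "g \<in> FA A \<longrightarrow> pure g \<longrightarrow> Q g" and gt: "g t = 0"
    show "g(t := c) \<in> FA A \<longrightarrow> pure (g(t := c)) \<longrightarrow> Q (g(t := c))"
    proof (intro impI)
      assume g1: "g(t := c) \<in> FA A" and g2: "pure (g(t := c))"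
      have ge: "g = (g(t := c))(t := 0)" using gt by (simp add: fun_eq_iff)
      have gFA: "g \<in> FA A" using FA_upd0[OF g1, of t] ge by simp
      have gp: "pure g" using g2 gt unfolding pure_def by (metis fun_upd_apply)
      show "Q (g(t := c))"
      proof (cases "c = 0")
        case True
        then show ?thesis using IH gFA gp ge by simp
      next
        case False
        then have "gens t \<subseteq> A" using g1 by (auto simp: FA_def)
        moreover obtain u v where t: "t = Br u v"
          using g2 False unfolding pure_def by (cases t) (auto, metis fun_upd_same)
        ultimately show ?thesis using step[OF gFA gp IH[rule_format, OF gFA gp], of u v c] upd_eq[of g t c, OF gt] by simp
      qed
    qed
  qed
  then show ?thesis using f by simp
qed

lemma pure_br:
  assumes "x \<in> FA A" "y \<in> FA A" "pure x" "pure y"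
  shows "fbr x y \<in> rel_ideal A E"
proof -
  have inner: "fbr (dl (Br u v)) y \<in> rel_ideal A E" if uv: "gens u \<subseteq> A" "gens v \<subseteq> A" for u v
    using assms(2,4)
  proof (rule pure_induct)
    show "fbr (dl (Br u v)) (\<lambda>_. 0) \<in> rel_ideal A E" by (simp add: fbr_zero_r rel_ideal.zero)
  next
    fix f w z c assume IH: "fbr (dl (Br u v)) f \<in> rel_ideal A E" and wz: "gens w \<subseteq> A" "gens z \<subseteq> A"
    have "fbr (fbr (dl u) (dl v)) (fbr (dl w) (dl z)) \<in> rel_ideal A E"
      using uv wz by (intro rel_ideal.metab FA_dl)
    then have "fbr (dl (Br u v)) (dl (Br w z)) \<in> rel_ideal A E" by (simp add: fbr_dl)
    then show "fbr (dl (Br u v)) (fadd f (fsmult c (dl (Br w z)))) \<in> rel_ideal A E"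
      unfolding fbr_add_r fbr_smult_r using IH by (intro rel_ideal.add rel_ideal.smult)
  qed
  show ?thesis
    using assms(1,3)
  proof (rule pure_induct)
    show "fbr (\<lambda>_. 0) y \<in> rel_ideal A E" by (simp add: fbr_zero_l rel_ideal.zero)
  next
    fix f u v c assume IH: "fbr f y \<in> rel_ideal A E" and uv: "gens u \<subseteq> A" "gens v \<subseteq> A"
    show "fbr (fadd f (fsmult c (dl (Br u v)))) y \<in> rel_ideal A E"
      unfolding fbr_add_l fbr_smult_l using IH inner[OF uv] by (intro rel_ideal.add rel_ideal.smult)
  qed
qed

lemma pure_Lv: "X \<in> Mset A E \<Longrightarrow> (\<forall>a. Lv X a = 0) \<Longrightarrow> pure (Mrep X)"
  by (simp add: pure_def Lv_def)

lemma Mbr_pure: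
  assumes "X \<in> Mset A E" "Y \<in> Mset A E" "\<forall>a. Lv X a = 0" "\<forall>a. Lv Y a = 0"
  shows "Mbr A E X Y = Mzero A E"
proof -
  have "fbr (Mrep X) (Mrep Y) \<in> rel_ideal A E"
    using assms by (intro pure_br Mrep_FA' pure_Lv)
  then show ?thesis unfolding Mbr_def
    using Mzero_iff[OF FA_fbr[OF Mrep_FA'[OF assms(1)] Mrep_FA'[OF assms(2)]]] by simp
qed


lemma subalgD:
  assumes "subalg A E L"
  shows "L \<subseteq> Mset A E" "Mzero A E \<in> L" "X \<in> L \<Longrightarrow> Y \<in> L \<Longrightarrow> Madd A E X Y \<in> L"
    "X \<in> L \<Longrightarrow> Msmult A E c X \<in> L" "X \<in> L \<Longrightarrow> Y \<in> L \<Longrightarrow> Mbr A E X Y \<in> L"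
  using assms unfolding subalg_def by blast+

lemma ex1_uniq: "\<exists>!q. P q \<Longrightarrow> P a \<Longrightarrow> P b \<Longrightarrow> a = b"
  by blast

lemma ds_ex:
  assumes ds: "direct_sum A E L1 L2" and H: "H \<in> Mset A E"
  shows "\<exists>!p. fst p \<in> L1 \<and> snd p \<in> L2 \<and> H = Madd A E (fst p) (snd p)"
proof -
  have "\<forall>H\<in>Mset A E. \<exists>!p. fst p \<in> L1 \<and> snd p \<in> L2 \<and> H = Madd A E (fst p) (snd p)"
    using ds unfolding direct_sum_def by (elim conjE)
  then show ?thesis using H by (rule bspec)
qed

lemma ds_basic:
  assumes ds: "direct_sum A E L1 L2" and H: "H \<in> Mset A E"
  shows "proj1 A E L1 L2 H \<in> L1 \<and> proj2 A E L1 L2 H \<in> L2 \<and>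
         H = Madd A E (proj1 A E L1 L2 H) (proj2 A E L1 L2 H)"
proof -
  define P where "P = (\<lambda>q. fst q \<in> L1 \<and> snd q \<in> L2 \<and> H = Madd A E (fst q) (snd q))"
  have ex: "\<exists>!q. P q"
    unfolding P_def by (rule ds_ex[OF ds H])
  then obtain p where p: "P p" by blast
  have uniq: "X = fst p \<and> Y = snd p" if "X \<in> L1" "Y \<in> L2" "H = Madd A E X Y" for X Y
  proof -
    have "P (X, Y)" using that by (simp add: P_def)
    from ex1_uniq[OF ex this p] show ?thesis by auto
  qed
  have p': "fst p \<in> L1" "snd p \<in> L2" "H = Madd A E (fst p) (snd p)" using p by (auto simp: P_def)
  have "proj1 A E L1 L2 H = fst p" unfolding proj1_def
    by (rule the_equality) (use p' uniq in blast)+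
  moreover have "proj2 A E L1 L2 H = snd p" unfolding proj2_def
    by (rule the_equality) (use p' uniq in blast)+
  ultimately show ?thesis using p' by simp
qed

lemma ds_sub:
  assumes ds: "direct_sum A E L1 L2"
  shows "subalg A E L1" "subalg A E L2"
  using ds by (auto simp: direct_sum_def)

lemma ds_proj_eq:
  assumes ds: "direct_sum A E L1 L2" and X: "X \<in> L1" and Y: "Y \<in> L2"
  shows "proj1 A E L1 L2 (Madd A E X Y) = X \<and> proj2 A E L1 L2 (Madd A E X Y) = Y"
proof -
  have H: "Madd A E X Y \<in> Mset A E"
    using Madd_Mset[OF subsetD[OF subalgD(1)[OF ds_sub(1)[OF ds]] X] subsetD[OF subalgD(1)[OF ds_sub(2)[OF ds]] Y]] .
  define P where "P = (\<lambda>q. fst q \<in> L1 \<and> snd q \<in> L2 \<and> Madd A E X Y = Madd A E (fst q) (snd q))"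
  have ex: "\<exists>!q. P q"
    unfolding P_def by (rule ds_ex[OF ds H])
  note b = ds_basic[OF ds H]
  have "P (proj1 A E L1 L2 (Madd A E X Y), proj2 A E L1 L2 (Madd A E X Y))"
    using b by (simp add: P_def)
  moreover have "P (X, Y)" using X Y by (simp add: P_def)
  ultimately have "(proj1 A E L1 L2 (Madd A E X Y), proj2 A E L1 L2 (Madd A E X Y)) = (X, Y)"
    by (rule ex1_uniq[OF ex])
  then show ?thesis by simp
qed


lemma ds_br: "direct_sum A E L1 L2 \<Longrightarrow> X \<in> L1 \<Longrightarrow> Y \<in> L2 \<Longrightarrow> Mbr A E X Y = Mzero A E"
  unfolding direct_sum_def by blast

lemma ds_rep:
  assumes ds: "direct_sum A E L1 L2" and H: "H \<in> Mset A E"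
  obtains x1 x2 where "x1 \<in> FA A" "x2 \<in> FA A" "Mcls A E x1 \<in> L1" "Mcls A E x2 \<in> L2"
    "proj2 A E L1 L2 H = Mcls A E x2" "H = Mcls A E (fadd x1 x2)"
proof -
  note b = ds_basic[OF ds H]
  let ?P1 = "proj1 A E L1 L2 H" and ?P2 = "proj2 A E L1 L2 H"
  have m1: "?P1 \<in> Mset A E" using b subalgD(1)[OF ds_sub(1)[OF ds]] by blast
  have m2: "?P2 \<in> Mset A E" using b subalgD(1)[OF ds_sub(2)[OF ds]] by blast
  have e1: "?P1 = Mcls A E (Mrep ?P1)" using Mset_rep[OF m1] by (rule conjunct2)
  have e2: "?P2 = Mcls A E (Mrep ?P2)" using Mset_rep[OF m2] by (rule conjunct2)
  have f1: "Mrep ?P1 \<in> FA A" using Mrep_FA'[OF m1] .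
  have f2: "Mrep ?P2 \<in> FA A" using Mrep_FA'[OF m2] .
  have "H = Madd A E ?P1 ?P2" using b by blast
  also have "\<dots> = Madd A E (Mcls A E (Mrep ?P1)) (Mcls A E (Mrep ?P2))" using e1 e2 by simp
  also have "\<dots> = Mcls A E (fadd (Mrep ?P1) (Mrep ?P2))" by (rule Madd_cls[OF f1 f2])
  finally have h: "H = Mcls A E (fadd (Mrep ?P1) (Mrep ?P2))" .
  have "Mcls A E (Mrep ?P1) \<in> L1" using b e1 by simp
  moreover have "Mcls A E (Mrep ?P2) \<in> L2" using b e2 by simp
  ultimately show ?thesis using that[OF f1 f2 _ _ e2 h] by blast
qed

lemma p2_add:
  assumes ds: "direct_sum A E L1 L2" and X: "X \<in> Mset A E" and Y: "Y \<in> Mset A E"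
  shows "proj2 A E L1 L2 (Madd A E X Y) = Madd A E (proj2 A E L1 L2 X) (proj2 A E L1 L2 Y)"
proof -
  obtain x1 x2 where x: "x1 \<in> FA A" "x2 \<in> FA A" "Mcls A E x1 \<in> L1" "Mcls A E x2 \<in> L2"
    "proj2 A E L1 L2 X = Mcls A E x2" "X = Mcls A E (fadd x1 x2)" using ds_rep[OF ds X] by blast
  obtain y1 y2 where y: "y1 \<in> FA A" "y2 \<in> FA A" "Mcls A E y1 \<in> L1" "Mcls A E y2 \<in> L2"
    "proj2 A E L1 L2 Y = Mcls A E y2" "Y = Mcls A E (fadd y1 y2)" using ds_rep[OF ds Y] by blast
  have "Madd A E X Y = Mcls A E (fadd (fadd x1 x2) (fadd y1 y2))"
    using x y by (simp add: Madd_cls FA_fadd)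
  also have "fadd (fadd x1 x2) (fadd y1 y2) = fadd (fadd x1 y1) (fadd x2 y2)"
    by (simp add: fun_eq_iff fadd_def algebra_simps)
  also have "Mcls A E \<dots> = Madd A E (Madd A E (Mcls A E x1) (Mcls A E y1)) (Madd A E (Mcls A E x2) (Mcls A E y2))"
    using x y by (simp add: Madd_cls FA_fadd)
  finally have e: "Madd A E X Y = \<dots>" .
  have "Madd A E (Mcls A E x1) (Mcls A E y1) \<in> L1"
    using x y by (intro subalgD(3)[OF ds_sub(1)[OF ds]])
  moreover have "Madd A E (Mcls A E x2) (Mcls A E y2) \<in> L2"
    using x y by (intro subalgD(3)[OF ds_sub(2)[OF ds]])
  ultimately show ?thesis using ds_proj_eq[OF ds] e x y by simp
qed

lemma p2_smult:
  assumes ds: "direct_sum A E L1 L2" and X: "X \<in> Mset A E"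
  shows "proj2 A E L1 L2 (Msmult A E c X) = Msmult A E c (proj2 A E L1 L2 X)"
proof -
  obtain x1 x2 where x: "x1 \<in> FA A" "x2 \<in> FA A" "Mcls A E x1 \<in> L1" "Mcls A E x2 \<in> L2"
    "proj2 A E L1 L2 X = Mcls A E x2" "X = Mcls A E (fadd x1 x2)" using ds_rep[OF ds X] by blast
  have "Msmult A E c X = Mcls A E (fsmult c (fadd x1 x2))"
    using x by (simp add: Msmult_cls FA_fadd)
  also have "fsmult c (fadd x1 x2) = fadd (fsmult c x1) (fsmult c x2)"
    by (simp add: fun_eq_iff fadd_def fsmult_def algebra_simps)
  also have "Mcls A E \<dots> = Madd A E (Msmult A E c (Mcls A E x1)) (Msmult A E c (Mcls A E x2))"
    using x by (simp add: Madd_cls Msmult_cls FA_fsmult)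
  finally have e: "Msmult A E c X = \<dots>" .
  have "Msmult A E c (Mcls A E x1) \<in> L1"
    using x by (intro subalgD(4)[OF ds_sub(1)[OF ds]])
  moreover have "Msmult A E c (Mcls A E x2) \<in> L2"
    using x by (intro subalgD(4)[OF ds_sub(2)[OF ds]])
  ultimately show ?thesis using ds_proj_eq[OF ds] e x by simp
qed

lemma p2_br:
  assumes ds: "direct_sum A E L1 L2" and X: "X \<in> Mset A E" and Y: "Y \<in> Mset A E"
  shows "proj2 A E L1 L2 (Mbr A E X Y) = Mbr A E (proj2 A E L1 L2 X) (proj2 A E L1 L2 Y)"
proof -
  obtain x1 x2 where x: "x1 \<in> FA A" "x2 \<in> FA A" "Mcls A E x1 \<in> L1" "Mcls A E x2 \<in> L2"
    "proj2 A E L1 L2 X = Mcls A E x2" "X = Mcls A E (fadd x1 x2)" using ds_rep[OF ds X] by blast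
  obtain y1 y2 where y: "y1 \<in> FA A" "y2 \<in> FA A" "Mcls A E y1 \<in> L1" "Mcls A E y2 \<in> L2"
    "proj2 A E L1 L2 Y = Mcls A E y2" "Y = Mcls A E (fadd y1 y2)" using ds_rep[OF ds Y] by blast
  have i1: "fbr x1 y2 \<in> rel_ideal A E"
  proof -
    have "Mbr A E (Mcls A E x1) (Mcls A E y2) = Mzero A E" using ds_br[OF ds x(3) y(4)] .
    then show ?thesis using x y by (simp add: Mbr_cls Mzero_iff FA_fbr)
  qed
  have i2: "fbr x2 y1 \<in> rel_ideal A E"
  proof -
    have "Mbr A E (Mcls A E y1) (Mcls A E x2) = Mzero A E" using ds_br[OF ds y(3) x(4)] .
    then have "fbr y1 x2 \<in> rel_ideal A E" using x y by (simp add: Mbr_cls Mzero_iff FA_fbr)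
    then show ?thesis using I_antisym[OF x(2) y(1)] by blast
  qed
  have "Mbr A E X Y = Mcls A E (fbr (fadd x1 x2) (fadd y1 y2))"
    using x y by (simp add: Mbr_cls FA_fadd)
  also have "\<dots> = Mcls A E (fadd (fbr x1 y1) (fbr x2 y2))"
  proof (rule Mcls_eq)
    show "fbr (fadd x1 x2) (fadd y1 y2) \<in> FA A" using x y by (intro FA_fbr FA_fadd)
    show "fadd (fbr x1 y1) (fbr x2 y2) \<in> FA A" using x y by (intro FA_fbr FA_fadd)
    have "fdiff (fbr (fadd x1 x2) (fadd y1 y2)) (fadd (fbr x1 y1) (fbr x2 y2)) = fadd (fbr x1 y2) (fbr x2 y1)"
      by (rule ext, case_tac x) (simp_all add: fadd_def fdiff_def algebra_simps)
    then show "fdiff (fbr (fadd x1 x2) (fadd y1 y2)) (fadd (fbr x1 y1) (fbr x2 y2)) \<in> rel_ideal A E"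
      using i1 i2 by (simp add: rel_ideal.add)
  qed
  also have "\<dots> = Madd A E (Mbr A E (Mcls A E x1) (Mcls A E y1)) (Mbr A E (Mcls A E x2) (Mcls A E y2))"
    using x y by (simp add: Madd_cls Mbr_cls FA_fbr)
  finally have e: "Mbr A E X Y = \<dots>" .
  have "Mbr A E (Mcls A E x1) (Mcls A E y1) \<in> L1"
    using x y by (intro subalgD(5)[OF ds_sub(1)[OF ds]])
  moreover have "Mbr A E (Mcls A E x2) (Mcls A E y2) \<in> L2"
    using x y by (intro subalgD(5)[OF ds_sub(2)[OF ds]])
  ultimately show ?thesis using ds_proj_eq[OF ds] e x y by simp
qed


lemma Madd_zero_zero: "Madd A E (Mzero A E) (Mzero A E) = (Mzero A E :: ('a lterm \<Rightarrow> 'r::idom) set)"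
proof -
  have "Madd A E (Mcls A E fzero) (Mcls A E fzero) = Mcls A E (fadd fzero (fzero :: 'a lterm \<Rightarrow> 'r))"
    by (rule Madd_cls[OF FA_fzero FA_fzero])
  also have "fadd fzero fzero = (fzero :: 'a lterm \<Rightarrow> 'r)" by (simp add: fun_eq_iff fadd_def fzero_def)
  finally show ?thesis unfolding Mzero_def .
qed

lemma Msmult_zero: "Msmult A E c (Mzero A E) = (Mzero A E :: ('a lterm \<Rightarrow> 'r::idom) set)"
proof -
  have "fsmult c fzero = (fzero :: 'a lterm \<Rightarrow> 'r)" by (simp add: fun_eq_iff fsmult_def fzero_def)
  then show ?thesis unfolding Mzero_def using Msmult_cls[OF FA_fzero, of A E c] by simp
qed

lemma Madd_zero_left: assumes "X \<in> Mset A E" shows "Madd A E (Mzero A E) X = X"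
proof -
  have f: "Mrep X \<in> FA A" and e: "X = Mcls A E (Mrep X)" using Mset_rep[OF assms] by auto
  have "fadd fzero (Mrep X) = Mrep X" by (simp add: fun_eq_iff fadd_def fzero_def)
  then have "Madd A E (Mzero A E) (Mcls A E (Mrep X)) = Mcls A E (Mrep X)"
    unfolding Mzero_def using Madd_cls[OF FA_fzero f, of E] by simp
  then show ?thesis using e by simp
qed

lemma Msmult_m1: assumes "X \<in> Mset A E" shows "Msmult A E (-1) (Msmult A E (-1) X) = X"
proof -
  have f: "Mrep X \<in> FA A" and e: "X = Mcls A E (Mrep X)" using Mset_rep[OF assms] by auto
  have "fsmult (-1) (fsmult (-1) (Mrep X)) = Mrep X" by (simp add: fun_eq_iff fsmult_def)
  then have "Msmult A E (-1) (Msmult A E (-1) (Mcls A E (Mrep X))) = Mcls A E (Mrep X)"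
    using Msmult_cls[OF f, of E] Msmult_cls[OF FA_fsmult[OF f], of E] by simp
  then show ?thesis using e by simp
qed

theorem lemma6:
  fixes A :: "'a set" and E :: "'a \<Rightarrow> 'a \<Rightarrow> bool"
    and L1 L2 :: "('a lterm \<Rightarrow> 'r::idom) set set"
    and g :: "'a \<Rightarrow> ('a lterm \<Rightarrow> 'r) set"
  assumes "simple_graph A E" and "card A \<ge> 2"
    and "compl_connected A E"
    and "direct_sum A E L1 L2"
    and "\<forall>a\<in>A. g a \<in> Mset A E"
    and "\<forall>a\<in>A. proj1 A E L1 L2 (Mgen A E a) = Madd A E (Mgen A E a) (g a)"
    and "\<forall>a\<in>A. proj2 A E L1 L2 (Mgen A E a) = Msmult A E (-1) (g a)"
    and "\<forall>a\<in>A. a \<notin> Msupp A E (omega1 A E (g a))"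
  shows "\<forall>a\<in>A. g a = Mzero A E"
proof -
  note ds = assms(4)
  have Esym: "E x y \<Longrightarrow> E y x" for x y using assms(1) by (simp add: simple_graph_def)
  have gM: "a \<in> A \<Longrightarrow> g a \<in> Mset A E" for a using assms(5) by blast
  have gL2: "g a \<in> L2" if a: "a \<in> A" for a
  proof -
    have "proj2 A E L1 L2 (Mgen A E a) \<in> L2" using ds_basic[OF ds Mgen_Mset[OF a]] by blast
    then have "Msmult A E (-1) (g a) \<in> L2" using assms(7) a by simp
    then have "Msmult A E (-1) (Msmult A E (-1) (g a)) \<in> L2" by (rule subalgD(4)[OF ds_sub(2)[OF ds]])
    then show ?thesis using Msmult_m1[OF gM[OF a]] by simp
  qed
  have gL1: "Madd A E (Mgen A E a) (g a) \<in> L1" if a: "a \<in> A" for a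
    using ds_basic[OF ds Mgen_Mset[OF a]] assms(6) a by simp
  have br0: "Mbr A E (Madd A E (Mgen A E i) (g i)) (g j) = Mzero A E" if "i \<in> A" "j \<in> A" for i j
    using ds_br[OF ds gL1 gL2] that by blast
  define v where "v j q = Lv (g j) q" for j q
  have vjj: "v j j = 0" if j: "j \<in> A" for j
  proof -
    let ?W = "omega1 A E (g j)"
    let ?d = "mdeg (Gen j)"
    have "?d j \<noteq> 0" by simp
    then have "Mcomp A E ?d ?W = Mzero A E"
      using assms(8) j unfolding Msupp_def by blast
    then have "Lv (Mcomp A E ?d ?W) j = 0" by (simp add: Lv_zero)
    moreover have fj: "Mrep (g j) \<in> FA A" using Mrep_FA'[OF gM[OF j]] .
    have fW: "(\<lambda>t. if llen t = 1 then Mrep (g j) t else 0) \<in> FA A" by (rule FA_restrict[OF fj])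
    have fW2: "Mrep ?W \<in> FA A" unfolding omega1_def by (rule Mrep_FA[OF fW])
    have "Lv (Mcomp A E ?d ?W) j = Mrep ?W (Gen j)"
      unfolding Mcomp_def using Lv_cls[OF FA_restrict[OF fW2], of E "\<lambda>t. mdeg t = ?d" j] by simp
    moreover have "Mrep ?W (Gen j) = Mrep (g j) (Gen j)"
      using Lv_cls[OF fW, of E j] unfolding omega1_def Lv_def by simp
    ultimately show ?thesis by (simp add: v_def Lv_def)
  qed
  have quad: "((if p = i then 1 else 0) + v i p) * v j q - ((if q = i then 1 else 0) + v i q) * v j p = 0"
    if ij: "i \<in> A" "j \<in> A" and pq: "\<not> E p q" "\<not> E q p" for i j p q
  proof -
    have m: "Madd A E (Mgen A E i) (g i) \<in> Mset A E" using Madd_Mset[OF Mgen_Mset[OF ij(1)] gM[OF ij(1)]] .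
    have lg: "Lv (Mgen A E i :: ('a lterm \<Rightarrow> 'r) set) a = (if a = i then 1 else 0)" for a by (rule Lv_gen[OF ij(1)])
    have "0 = Qv (Mbr A E (Madd A E (Mgen A E i) (g i)) (g j)) p q"
      using br0[OF ij] Qv_zero[where A=A and E=E and p=p and q=q, OF pq] by simp
    also have "\<dots> = Lv (Madd A E (Mgen A E i) (g i)) p * Lv (g j) q - Lv (Madd A E (Mgen A E i) (g i)) q * Lv (g j) p"
      by (rule Qv_br[OF m gM[OF ij(2)] pq])
    also have "\<dots> = ((if p = i then 1 else 0) + v i p) * v j q - ((if q = i then 1 else 0) + v i q) * v j p"
      using Lv_add[OF Mgen_Mset[OF ij(1)] gM[OF ij(1)]] lg by (simp add: v_def)
    finally show ?thesis by simp
  qed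
  have v0: "v j q = 0" if j: "j \<in> A" for j q
  proof (cases "q \<in> A")
    case False
    have "Mrep (g j) \<in> FA A" using Mrep_FA'[OF gM[OF j]] .
    then show ?thesis using False by (auto simp: v_def Lv_def FA_def)
  next
    case True
    have "\<exists>y\<in>A. y \<noteq> q"
    proof (rule ccontr)
      assume "\<not> (\<exists>y\<in>A. y \<noteq> q)"
      then have "A \<subseteq> {q}" by blast
      then have "card A \<le> 1" using card_mono[of "{q}" A] by simp
      with assms(2) show False by simp
    qed
    then obtain y where y: "y \<in> A" "y \<noteq> q" by blast
    have "(\<lambda>u v. u \<in> A \<and> v \<in> A \<and> u \<noteq> v \<and> \<not> E u v)\<^sup>*\<^sup>* q y"
      using assms(3) True y(1) unfolding compl_connected_def by blast
    then obtain i where i: "i \<in> A" "q \<noteq> i" "\<not> E q i"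
    proof (cases rule: converse_rtranclpE)
      case base then show ?thesis using y(2) by simp
    next
      case (step z) then show ?thesis using that by blast
    qed
    have n1: "\<not> E i q" "\<not> E q i" using i Esym by blast+
    have "v i q = 0" using quad[OF i(1) i(1) n1] vjj[OF i(1)] i(2) by (simp add: eq_commute[of q i])
    then show ?thesis using quad[OF i(1) j n1] vjj[OF i(1)] i(2) by (simp add: eq_commute[of q i])
  qed
  have P2M: "proj2 A E L1 L2 H \<in> Mset A E" if "H \<in> Mset A E" for H
    using ds_basic[OF ds that] subalgD(1)[OF ds_sub(2)[OF ds]] by blast
  have dlM: "gens t \<subseteq> A \<Longrightarrow> (Mcls A E (dl t) :: ('a lterm \<Rightarrow> 'r) set) \<in> Mset A E" for t
    by (intro Mcls_in FA_dl)
  have L2pure: "Lv (proj2 A E L1 L2 (Mcls A E (dl t))) a = 0" if "gens t \<subseteq> A" for t a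
  proof (cases t)
    case (Gen b)
    then have b: "b \<in> A" using that by simp
    have "(Mcls A E (dl t) :: ('a lterm \<Rightarrow> 'r) set) = Mgen A E b" using Gen by (simp add: Mgen_def fgen_dl)
    then have "proj2 A E L1 L2 (Mcls A E (dl t)) = Msmult A E (-1) (g b)" using assms(7) b by simp
    then show ?thesis using Lv_smult[OF gM[OF b]] v0[OF b] by (simp add: v_def)
  next
    case (Br u w)
    then have uw: "gens u \<subseteq> A" "gens w \<subseteq> A" using that by auto
    have du: "(dl u :: 'a lterm \<Rightarrow> 'r) \<in> FA A" and dw: "(dl w :: 'a lterm \<Rightarrow> 'r) \<in> FA A"
      using uw by (auto intro: FA_dl)
    have "(Mcls A E (dl t) :: ('a lterm \<Rightarrow> 'r) set) = Mbr A E (Mcls A E (dl u)) (Mcls A E (dl w))"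
      using Br Mbr_cls[where E=E, OF du dw] by (simp add: fbr_dl)
    then have "proj2 A E L1 L2 (Mcls A E (dl t)) = Mbr A E (proj2 A E L1 L2 (Mcls A E (dl u))) (proj2 A E L1 L2 (Mcls A E (dl w)))"
      using p2_br[OF ds dlM[OF uw(1)] dlM[OF uw(2)]] by simp
    then show ?thesis using Lv_br[OF P2M[OF dlM[OF uw(1)]] P2M[OF dlM[OF uw(2)]]] by simp
  qed
  have brzero: "proj2 A E L1 L2 (Mcls A E (dl (Br u w))) = Mzero A E" if uw: "gens u \<subseteq> A" "gens w \<subseteq> A" for u w
  proof -
    have du: "(dl u :: 'a lterm \<Rightarrow> 'r) \<in> FA A" and dw: "(dl w :: 'a lterm \<Rightarrow> 'r) \<in> FA A"
      using uw by (auto intro: FA_dl)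
    have "(Mcls A E (dl (Br u w)) :: ('a lterm \<Rightarrow> 'r) set) = Mbr A E (Mcls A E (dl u)) (Mcls A E (dl w))"
      using Mbr_cls[where E=E, OF du dw] by (simp add: fbr_dl)
    then have "proj2 A E L1 L2 (Mcls A E (dl (Br u w))) = Mbr A E (proj2 A E L1 L2 (Mcls A E (dl u))) (proj2 A E L1 L2 (Mcls A E (dl w)))"
      using p2_br[OF ds dlM[OF uw(1)] dlM[OF uw(2)]] by simp
    also have "\<dots> = Mzero A E"
      using Mbr_pure[OF P2M[OF dlM[OF uw(1)]] P2M[OF dlM[OF uw(2)]]] L2pure uw by blast
    finally show ?thesis .
  qed
  have p2zero: "proj2 A E L1 L2 (Mzero A E) = Mzero A E"
    using ds_proj_eq[OF ds subalgD(2)[OF ds_sub(1)[OF ds]] subalgD(2)[OF ds_sub(2)[OF ds]]]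
    by (simp add: Madd_zero_zero)
  have pure_zero: "proj2 A E L1 L2 (Mcls A E f) = Mzero A E" if f: "f \<in> FA A" "pure f" for f
    using f
  proof (rule pure_induct)
    show "proj2 A E L1 L2 (Mcls A E (\<lambda>_. 0)) = Mzero A E" using p2zero by (simp add: Mzero_cls)
  next
    fix h :: "'a lterm \<Rightarrow> 'r" and u w c assume h: "h \<in> FA A" and IH: "proj2 A E L1 L2 (Mcls A E h) = Mzero A E"
      and uw: "gens u \<subseteq> A" "gens w \<subseteq> A"
    have d: "(dl (Br u w) :: 'a lterm \<Rightarrow> 'r) \<in> FA A" using uw by (intro FA_dl) auto
    have "Mcls A E (fadd h (fsmult c (dl (Br u w)))) = Madd A E (Mcls A E h) (Msmult A E c (Mcls A E (dl (Br u w))))"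
      using Madd_cls[where E=E, OF h FA_fsmult[OF d]] Msmult_cls[where E=E, OF d] by simp
    moreover have "proj2 A E L1 L2 (Madd A E (Mcls A E h) (Msmult A E c (Mcls A E (dl (Br u w))))) = Mzero A E"
      using p2_add[OF ds Mcls_in[OF h] Msmult_Mset[OF Mcls_in[OF d]]] p2_smult[OF ds Mcls_in[OF d]]
        IH brzero[OF uw] by (simp add: Msmult_zero Madd_zero_zero)
    ultimately show "proj2 A E L1 L2 (Mcls A E (fadd h (fsmult c (dl (Br u w))))) = Mzero A E" by simp
  qed
  show ?thesis
  proof
    fix j assume j: "j \<in> A"
    have f: "Mrep (g j) \<in> FA A" and e: "g j = Mcls A E (Mrep (g j))" using Mset_rep[OF gM[OF j]] by auto
    have "pure (Mrep (g j))" using v0[OF j] by (simp add: pure_def v_def Lv_def)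
    then have "proj2 A E L1 L2 (g j) = Mzero A E" using pure_zero[OF f] e by simp
    moreover have "proj2 A E L1 L2 (g j) = g j"
      using ds_proj_eq[OF ds subalgD(2)[OF ds_sub(1)[OF ds]] gL2[OF j]] Madd_zero_left[OF gM[OF j]] by simp
    ultimately show "g j = Mzero A E" by simp
  qed
qed

end
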